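(* If $G_{\le t_c}$ is connected, then $$\sum_{t\le t_c}\sum_{i=1}^{m_t}\Delta_{t,i}^2\ge\frac{1}{2dmn}\|x(0)-\hat x\|_q^2,$$ where $q=d\mathbf 1$, $\hat x=\big(\frac1n\sum_ix_i(0)\big)\mathbf 1$, and $\|y\|_q^2=\sum_iq_iy_i^2$.
   Context: Expanding averaging system: - Each $G_t$ is a graph on $[n]$ with self-loops whose $0/1$ adjacency matrix $M_t$ has all row sums $d$. - Every component of $G_t$ has Cheeger constant at least $h$. - $G_t$ has $m_t\le m$ connected components. - The dynamics is $x(t+1)=\frac1dM_tx(t)$. $\Delta_{t,i}$ is the diameter $\max-\min$ of the positions $x_j(t)$ over the vertices $j$ of the $i$-th connected component of $G_t$. $G_{\le t}$ is the union of the edges of $G_0,\dots,G_t$. Let $t_1,\dots,t_c$ be the times $t>0$ at which $G_{\le t}$ has fewer connected components than $G_{\le t-1}$; if there are none, set $c=1$ and $t_c=0$. *)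

theory Defs
  imports Complex_Main
begin

text \<open>Graphs on the vertex set [n] = {0..<n} are given by an edge predicate
  G :: nat \<Rightarrow> nat \<Rightarrow> bool (adjacency matrix entries).\<close>

definition edge_set :: "nat \<Rightarrow> (nat \<Rightarrow> nat \<Rightarrow> bool) \<Rightarrow> (nat \<times> nat) set" where
  "edge_set n G = {(i, j). i < n \<and> j < n \<and> G i j}"

definition components :: "nat \<Rightarrow> (nat \<Rightarrow> nat \<Rightarrow> bool) \<Rightarrow> nat set set" where
  "components n G = {{j. (i, j) \<in> (edge_set n G)\<^sup>*} | i. i < n}"

definition num_components :: "nat \<Rightarrow> (nat \<Rightarrow> nat \<Rightarrow> bool) \<Rightarrow> nat" where
  "num_components n G = card (components n G)"

definition connected_graph :: "nat \<Rightarrow> (nat \<Rightarrow> nat \<Rightarrow> bool) \<Rightarrow> bool" where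
  "connected_graph n G \<longleftrightarrow> num_components n G = 1"

definition union_graph :: "(nat \<Rightarrow> nat \<Rightarrow> nat \<Rightarrow> bool) \<Rightarrow> nat \<Rightarrow> nat \<Rightarrow> nat \<Rightarrow> bool" where
  "union_graph Gs t = (\<lambda>i j. \<exists>s\<le>t. Gs s i j)"

definition merge_times :: "nat \<Rightarrow> (nat \<Rightarrow> nat \<Rightarrow> nat \<Rightarrow> bool) \<Rightarrow> nat set" where
  "merge_times n Gs = {t. 0 < t \<and>
     num_components n (union_graph Gs t) < num_components n (union_graph Gs (t - 1))}"

text \<open>t_c: the last merge time, or 0 if there is none.\<close>
definition last_merge_time :: "nat \<Rightarrow> (nat \<Rightarrow> nat \<Rightarrow> nat \<Rightarrow> bool) \<Rightarrow> nat" where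
  "last_merge_time n Gs = (if merge_times n Gs = {} then 0 else Max (merge_times n Gs))"

definition components_cheeger_ge :: "nat \<Rightarrow> (nat \<Rightarrow> nat \<Rightarrow> bool) \<Rightarrow> real \<Rightarrow> bool" where
  "components_cheeger_ge n G h \<longleftrightarrow>
     (\<forall>C \<in> components n G. \<forall>S. S \<subseteq> C \<longrightarrow> S \<noteq> {} \<longrightarrow> 2 * card S \<le> card C \<longrightarrow>
        real (card {(i, j). i \<in> S \<and> j \<in> C - S \<and> G i j}) \<ge> h * real (card S))"

definition diam :: "(nat \<Rightarrow> real) \<Rightarrow> nat set \<Rightarrow> real" where
  "diam y C = Max (y ` C) - Min (y ` C)"

end

theory Submission imports Defs "HOL-Analysis.Analysis" begin
hide_const (open) Connected.components

lemma rtr_lt: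
  assumes "(a, j) \<in> (edge_set n G)\<^sup>*" "a < n" shows "j < n"
  using assms by (induction rule: rtrancl_induct) (auto simp: edge_set_def)

lemma comp_props:
  assumes "C \<in> components n G"
  shows "C \<noteq> {}" "finite C" "C \<subseteq> {..<n}"
proof -
  obtain i where i: "i < n" "C = {j. (i, j) \<in> (edge_set n G)\<^sup>*}"
    using assms unfolding Defs.components_def by auto
  show "C \<noteq> {}" using i by auto
  show sub: "C \<subseteq> {..<n}" using i rtr_lt by auto
  show "finite C" using sub finite_subset by blast
qed

lemma finite_components: "finite (components n G)"
proof -
  have "components n G = (\<lambda>i. {j. (i, j) \<in> (edge_set n G)\<^sup>*}) ` {..<n}"
    unfolding Defs.components_def by auto
  then show ?thesis by simp
qed

lemma rtr_closed:
  assumes "(a, j) \<in> (edge_set n G)\<^sup>*" "a \<in> L"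
    and "\<And>u v. u < n \<Longrightarrow> v < n \<Longrightarrow> u \<in> L \<Longrightarrow> G u v \<Longrightarrow> v \<in> L"
  shows "j \<in> L"
  using assms(1)
proof (induction rule: rtrancl_induct)
  case base
  show ?case by (rule assms(2))
next
  case (step y z)
  from step.hyps(2) have e: "y < n" "z < n" "G y z" by (auto simp: edge_set_def)
  show ?case by (rule assms(3)[OF e(1,2) step.IH e(3)])
qed

lemma cover_len:
  fixes a b :: "'f \<Rightarrow> real"
  assumes fin: "finite F" and cov: "{lo..<hi} \<subseteq> (\<Union>f\<in>F. {a f..b f})"
    and ab: "\<And>f. f \<in> F \<Longrightarrow> a f \<le> b f"
  shows "hi - lo \<le> (\<Sum>f\<in>F. b f - a f)"
proof (cases "lo \<le> hi")
  case False
  have "0 \<le> (\<Sum>f\<in>F. b f - a f)" using ab by (intro sum_nonneg) auto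
  then show ?thesis using False by simp
next
  case True
  have "hi - lo = measure lborel {lo..<hi}" using True by simp
  also have "\<dots> \<le> measure lborel (\<Union>f\<in>F. {a f..b f})"
    apply (rule measure_mono_fmeasurable[OF cov])
     apply simp
    apply (rule fmeasurable.finite_UN[OF fin]) by (metis cbox_interval fmeasurable_cbox)
  also have "\<dots> \<le> (\<Sum>f\<in>F. measure lborel {a f..b f})"
    apply (rule measure_subadditive_finite[OF fin]) by (auto simp: emeasure_lborel_Icc_eq)
  also have "\<dots> = (\<Sum>f\<in>F. b f - a f)"
    using ab by (intro sum.cong) auto
  finally show ?thesis .
qed

lemma aux_eqA: fixes d m n :: nat and X :: real assumes "0<d" "0<m" "0<n"
  shows "1 / (2 * real d * real m * real n) * (real n * real d * X) = X / (2 * real m)"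
  using assms by (simp add: field_simps)
lemma aux_B: fixes m :: nat and X S :: real assumes "0<m" "X \<le> 2 * real m * S"
  shows "X / (2 * real m) \<le> S"
  using assms by (simp add: field_simps)
lemma aux_C: fixes n :: nat and lo s :: real assumes "0<n" "real n * lo \<le> s" shows "lo \<le> 1 / real n * s"
  using assms by (simp add: field_simps)
lemma aux_D: fixes n :: nat and hi s :: real assumes "0<n" "s \<le> real n * hi" shows "1 / real n * s \<le> hi"
  using assms by (simp add: field_simps)

theorem lemma8:
  fixes n d m :: nat and h :: real
    and Gs :: "nat \<Rightarrow> nat \<Rightarrow> nat \<Rightarrow> bool"
    and x :: "nat \<Rightarrow> nat \<Rightarrow> real"
  assumes sym: "\<And>t i j. i < n \<Longrightarrow> j < n \<Longrightarrow> Gs t i j = Gs t j i"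
    and loops: "\<And>t i. i < n \<Longrightarrow> Gs t i i"
    and regular: "\<And>t i. i < n \<Longrightarrow> card {j. j < n \<and> Gs t i j} = d"
    and cheeger: "\<And>t. components_cheeger_ge n (Gs t) h"
    and ncomp: "\<And>t. num_components n (Gs t) \<le> m"
    and dyn: "\<And>t i. i < n \<Longrightarrow>
               x (Suc t) i = (1 / real d) * (\<Sum>j\<in>{j. j < n \<and> Gs t i j}. x t j)"
    and conn: "connected_graph n (union_graph Gs (last_merge_time n Gs))"
  shows "(\<Sum>t\<le>last_merge_time n Gs. \<Sum>C\<in>components n (Gs t). (diam (x t) C)\<^sup>2)
           \<ge> 1 / (2 * real d * real m * real n) *
             (\<Sum>i<n. real d * (x 0 i - (1 / real n) * (\<Sum>j<n. x 0 j))\<^sup>2)"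
proof (cases "n = 0")
  case True
  have "0 \<le> (\<Sum>t\<le>last_merge_time n Gs. \<Sum>C\<in>components n (Gs t). (diam (x t) C)\<^sup>2)"
    by (intro sum_nonneg) auto
  then show ?thesis using True by simp
next
  case False
  then have npos: "0 < n" by simp
  have dpos: "0 < d"
  proof -
    have "0 \<in> {j. j < n \<and> Gs 0 0 j}" using npos loops by auto
    then have "card {j. j < n \<and> Gs 0 0 j} > 0" by (auto simp: card_gt_0_iff)
    then show ?thesis using regular[OF npos] by simp
  qed
  define tc where "tc = last_merge_time n Gs"
  define S where "S = (\<Sum>t\<le>tc. \<Sum>C\<in>components n (Gs t). (diam (x t) C)\<^sup>2)"
  define V where "V = x 0 ` {..<n}"
  have Vfin: "finite V" and Vne: "V \<noteq> {}" using npos by (auto simp: V_def)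
  define lo where "lo = Min V"
  define hi where "hi = Max V"
  obtain i0 where i0: "i0 < n" "x 0 i0 = lo" using Min_in[OF Vfin Vne] by (auto simp: lo_def V_def)
  obtain i1 where i1: "i1 < n" "x 0 i1 = hi" using Max_in[OF Vfin Vne] by (auto simp: hi_def V_def)
  have lo_le: "\<And>i. i < n \<Longrightarrow> lo \<le> x 0 i" using Vfin by (auto simp: lo_def V_def)
  have le_hi: "\<And>i. i < n \<Longrightarrow> x 0 i \<le> hi" using Vfin by (auto simp: hi_def V_def)
  have lohi: "lo \<le> hi" using lo_le[OF i0(1)] le_hi[OF i0(1)] by simp
  define comp where "comp s a = {j. (a, j) \<in> (edge_set n (Gs s))\<^sup>*}" for s a
  have comps_eq: "components n (Gs s) = comp s ` {..<n}" for s
    unfolding Defs.components_def comp_def by auto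
  define E where "E L s = {(a, b). a < n \<and> b < n \<and> a \<in> L \<and> b \<notin> L \<and> Gs s a b}" for L s
  define tau where "tau L = (LEAST s. E L s \<noteq> {})" for L
  define Cc where "Cc L = comp (tau L) (fst (SOME p. p \<in> E L (tau L)))" for L
  define Lt where "Lt th = {i. i < n \<and> x 0 i \<le> th}" for th
  define Ls where "Ls = Lt ` {lo..<hi}"
  define lf where "lf p = Min (x (fst p) ` snd p)" for p :: "nat \<times> nat set"
  define uf where "uf p = Max (x (fst p) ` snd p)" for p :: "nat \<times> nat set"
  define F1 where "F1 = (\<lambda>C. (0::nat, C)) ` components n (Gs 0)"
  define F2 where "F2 = (\<lambda>L. (tau L, Cc L)) ` {L \<in> Ls. 0 < tau L}"
  define F where "F = F1 \<union> F2"

  have crossA: "\<exists>s\<le>tc. E L s \<noteq> {}" if L0: "i0 \<in> L" "i1 \<notin> L" for L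
  proof -
    define U where "U = union_graph Gs tc"
    have c1: "card (components n U) = 1"
      using conn unfolding tc_def U_def connected_graph_def num_components_def .
    have m0: "{j. (i0, j) \<in> (edge_set n U)\<^sup>*} \<in> components n U"
      using i0 unfolding Defs.components_def by auto
    have m1: "{j. (i1, j) \<in> (edge_set n U)\<^sup>*} \<in> components n U"
      using i1 unfolding Defs.components_def by auto
    have "{j. (i0, j) \<in> (edge_set n U)\<^sup>*} = {j. (i1, j) \<in> (edge_set n U)\<^sup>*}"
      using c1 m0 m1 by (metis card_1_singletonE singletonD)
    then have "(i0, i1) \<in> (edge_set n U)\<^sup>*" by auto
    then obtain u v where uv: "u < n" "v < n" "u \<in> L" "U u v" "v \<notin> L"
      using rtr_closed[of i0 i1 n U L] L0 by blast
    then obtain s where "s \<le> tc" "Gs s u v" unfolding U_def union_graph_def by auto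
    then show ?thesis using uv unfolding E_def by blast
  qed
  have LsA: "i0 \<in> L" "i1 \<notin> L" "L \<subseteq> {..<n}" if "L \<in> Ls" for L
    using that i0 i1 unfolding Ls_def Lt_def by auto
  have tauA: "tau L \<le> tc" "E L (tau L) \<noteq> {}" if LL: "L \<in> Ls" for L
  proof -
    obtain s where s: "s \<le> tc" "E L s \<noteq> {}" using crossA LsA[OF LL] by blast
    show "E L (tau L) \<noteq> {}" unfolding tau_def by (rule LeastI[of _ s]) (use s in auto)
    show "tau L \<le> tc" unfolding tau_def using Least_le[of _ s] s by (meson le_trans)
  qed
  have inv: "\<forall>i<n. (x s i \<le> th \<longleftrightarrow> i \<in> Lt th)" if "s \<le> tau (Lt th)" for s th
    using that
  proof (induction s)
    case 0
    then show ?case unfolding Lt_def by auto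
  next
    case (Suc s)
    let ?L = "Lt th"
    have sle: "s \<le> tau ?L" using Suc.prems by simp
    have IH: "\<forall>i<n. (x s i \<le> th \<longleftrightarrow> i \<in> ?L)" by (rule Suc.IH[OF sle])
    have slt: "s < (LEAST s. E ?L s \<noteq> {})" using Suc.prems unfolding tau_def by simp
    have noE: "E ?L s = {}" using not_less_Least[OF slt] by simp
    show ?case
    proof (intro allI impI)
      fix i assume i: "i < n"
      define N where "N = {j. j < n \<and> Gs s i j}"
      have Nfin: "finite N" unfolding N_def by auto
      have cN: "card N = d" unfolding N_def using regular[OF i] .
      have xi: "x (Suc s) i = (1 / real d) * (\<Sum>j\<in>N. x s j)" unfolding N_def using dyn[OF i] .
      show "x (Suc s) i \<le> th \<longleftrightarrow> i \<in> ?L"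
      proof (cases "i \<in> ?L")
        case True
        have jL: "j \<in> ?L" if j: "j \<in> N" for j
        proof (rule ccontr)
          assume "j \<notin> ?L"
          then have "(i, j) \<in> E ?L s" using j i True unfolding N_def E_def by simp
          then show False using noE by simp
        qed
        have "x s j \<le> th" if j: "j \<in> N" for j
        proof -
          have "j < n" using j unfolding N_def by simp
          then show ?thesis using IH jL[OF j] by simp
        qed
        then have "(\<Sum>j\<in>N. x s j) \<le> (\<Sum>j\<in>N. th)" by (rule sum_mono)
        then have "(\<Sum>j\<in>N. x s j) \<le> real d * th" using cN by simp
        moreover have "real d * x (Suc s) i = (\<Sum>j\<in>N. x s j)" using xi dpos by simp
        ultimately have "real d * x (Suc s) i \<le> real d * th" by linarith
        then have "x (Suc s) i \<le> th" using dpos by (simp add: mult_le_cancel_left_pos)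
        then show ?thesis using True by simp
      next
        case False
        have "\<And>j. j \<in> N \<Longrightarrow> j \<notin> ?L"
        proof
          fix j assume j: "j \<in> N" "j \<in> ?L"
          then have "Gs s j i" using sym[OF i, of j s] unfolding N_def by auto
          then have "(j, i) \<in> E ?L s" using j i False unfolding N_def E_def by auto
          then show False using noE by auto
        qed
        then have "th < x s j" if j: "j \<in> N" for j
        proof -
          have "j < n" using j unfolding N_def by simp
          then show ?thesis using IH \<open>\<And>j. j \<in> N \<Longrightarrow> j \<notin> ?L\<close>[OF j] by (metis not_le)
        qed
        moreover have "N \<noteq> {}" using loops[OF i] i unfolding N_def by auto
        ultimately have "(\<Sum>j\<in>N. th) < (\<Sum>j\<in>N. x s j)" using Nfin by (intro sum_strict_mono) auto
        then have "real d * th < (\<Sum>j\<in>N. x s j)" using cN by simp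
        moreover have "real d * x (Suc s) i = (\<Sum>j\<in>N. x s j)" using xi dpos by simp
        ultimately have "real d * th < real d * x (Suc s) i" by linarith
        then have "th < x (Suc s) i" using dpos by (simp add: mult_less_cancel_left_pos)
        then show ?thesis using False by simp
      qed
    qed
  qed
  have LsI: "Lt th \<in> Ls" if "th \<in> {lo..<hi}" for th using that unfolding Ls_def by auto
  have compI: "comp s a \<in> components n (Gs s)" if "a < n" for s a
    unfolding comps_eq using that by simp
  have CcA: "Cc L \<in> components n (Gs (tau L))" "fst (SOME p. p \<in> E L (tau L)) \<in> Cc L"
     "snd (SOME p. p \<in> E L (tau L)) \<in> Cc L"
     "fst (SOME p. p \<in> E L (tau L)) \<in> L" "snd (SOME p. p \<in> E L (tau L)) \<notin> L"
     "fst (SOME p. p \<in> E L (tau L)) < n" "snd (SOME p. p \<in> E L (tau L)) < n"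
    if LL: "L \<in> Ls" for L
  proof -
    obtain a b where ab: "(SOME p. p \<in> E L (tau L)) = (a, b)" by (cases "SOME p. p \<in> E L (tau L)")
    have pE: "(SOME p. p \<in> E L (tau L)) \<in> E L (tau L)" using tauA(2)[OF LL] by (simp add: some_in_eq)
    then have "(a, b) \<in> E L (tau L)" by (simp only: ab)
    then have abp: "a < n" "b < n" "a \<in> L" "b \<notin> L" "Gs (tau L) a b" unfolding E_def by auto
    have Cc: "Cc L = comp (tau L) a" unfolding Cc_def ab by simp
    show "Cc L \<in> components n (Gs (tau L))" unfolding Cc using compI[OF abp(1)] .
    show "fst (SOME p. p \<in> E L (tau L)) \<in> Cc L" unfolding Cc ab comp_def by simp
    have "(a, b) \<in> edge_set n (Gs (tau L))" using abp unfolding edge_set_def by simp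
    then show "snd (SOME p. p \<in> E L (tau L)) \<in> Cc L" unfolding Cc ab comp_def by simp
    show "fst (SOME p. p \<in> E L (tau L)) \<in> L" "snd (SOME p. p \<in> E L (tau L)) \<notin> L"
     "fst (SOME p. p \<in> E L (tau L)) < n" "snd (SOME p. p \<in> E L (tau L)) < n"
      unfolding ab using abp by auto
  qed
  have th_in: "lf (tau (Lt th), Cc (Lt th)) \<le> th \<and> th \<le> uf (tau (Lt th), Cc (Lt th))"
    if th: "th \<in> {lo..<hi}" for th
  proof -
    let ?L = "Lt th"
    have LL: "?L \<in> Ls" using LsI[OF th] .
    define a where "a = fst (SOME p. p \<in> E ?L (tau ?L))"
    define b where "b = snd (SOME p. p \<in> E ?L (tau ?L))"
    have A: "a \<in> Cc ?L" "b \<in> Cc ?L" "a \<in> ?L" "b \<notin> ?L" "a < n" "b < n"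
      using CcA[OF LL] unfolding a_def b_def by auto
    have fin: "finite (Cc ?L)" using comp_props(2)[OF CcA(1)[OF LL]] .
    have iv: "\<forall>i<n. (x (tau ?L) i \<le> th \<longleftrightarrow> i \<in> ?L)" using inv[of "tau ?L" th] by simp
    have "x (tau ?L) a \<le> th" using iv A by auto
    moreover have "th < x (tau ?L) b" using iv A by (metis not_le)
    moreover have "lf (tau ?L, Cc ?L) \<le> x (tau ?L) a" unfolding lf_def using fin A by simp
    moreover have "x (tau ?L) b \<le> uf (tau ?L, Cc ?L)" unfolding uf_def using fin A by simp
    ultimately show ?thesis by simp
  qed
  have cover: "{lo..<hi} \<subseteq> (\<Union>p\<in>F. {lf p..uf p})"
  proof
    fix th assume th: "th \<in> {lo..<hi}"
    let ?L = "Lt th"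
    have LL: "?L \<in> Ls" using LsI[OF th] .
    have "(tau ?L, Cc ?L) \<in> F"
    proof (cases "tau ?L = 0")
      case True
      then have "(tau ?L, Cc ?L) \<in> F1" unfolding F1_def using CcA(1)[OF LL] by auto
      then show ?thesis unfolding F_def by simp
    next
      case False
      then have "(tau ?L, Cc ?L) \<in> F2" unfolding F2_def using LL by auto
      then show ?thesis unfolding F_def by simp
    qed
    then show "th \<in> (\<Union>p\<in>F. {lf p..uf p})" using th_in[OF th] by auto
  qed
  have Fprops: "snd p \<in> components n (Gs (fst p)) \<and> fst p \<le> tc" if "p \<in> F" for p
    using that tauA(1) CcA(1) unfolding F_def F1_def F2_def by auto
  have LsPow: "Ls \<subseteq> Pow {..<n}" unfolding Ls_def Lt_def by auto
  have Lsfin: "finite Ls" using finite_subset[OF LsPow] by simp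
  have Ffin: "finite F" unfolding F_def F1_def F2_def using finite_components Lsfin by auto
  have lfuf: "lf p \<le> uf p" "uf p - lf p = diam (x (fst p)) (snd p)" if "p \<in> F" for p
  proof -
    have C: "snd p \<in> components n (Gs (fst p))" using Fprops[OF that] by simp
    obtain c where c: "c \<in> snd p" using comp_props(1)[OF C] by auto
    have f: "finite (x (fst p) ` snd p)" using comp_props(2)[OF C] by simp
    have "Min (x (fst p) ` snd p) \<le> x (fst p) c" using f c by simp
    also have "\<dots> \<le> Max (x (fst p) ` snd p)" using f c by simp
    finally show "lf p \<le> uf p" unfolding lf_def uf_def .
    show "uf p - lf p = diam (x (fst p)) (snd p)" unfolding lf_def uf_def diam_def by simp
  qed
  define comps0 where "comps0 = components n (Gs 0)"
  have c0fin: "finite comps0" unfolding comps0_def by (rule finite_components)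
  have c0m: "card comps0 \<le> m" using ncomp[of 0] unfolding comps0_def num_components_def .
  have cF1: "card F1 \<le> m" unfolding F1_def using card_image_le[OF finite_components, of "\<lambda>C. (0::nat, C)" n "Gs 0"] c0m
    unfolding comps0_def by linarith
  define A where "A = {L \<in> Ls. 0 < tau L}"
  define phi where "phi L = card {C \<in> comps0. C \<subseteq> L}" for L
  have closedA: "comp 0 i \<subseteq> L" if LA: "L \<in> A" and i: "i \<in> L" for L i
  proof -
    have "E L 0 = {}" using LA not_less_Least[of 0 "\<lambda>s. E L s \<noteq> {}"] unfolding A_def tau_def by auto
    then have cl: "\<And>u v. u < n \<Longrightarrow> v < n \<Longrightarrow> u \<in> L \<Longrightarrow> Gs 0 u v \<Longrightarrow> v \<in> L"
      unfolding E_def by blast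
    show ?thesis
    proof
      fix j assume "j \<in> comp 0 i"
      then have "(i, j) \<in> (edge_set n (Gs 0))\<^sup>*" by (simp add: comp_def)
      then show "j \<in> L" by (rule rtr_closed[OF _ i cl])
    qed
  qed
  have Lunion: "L = \<Union>{C \<in> comps0. C \<subseteq> L}" if LA: "L \<in> A" for L
  proof
    show "L \<subseteq> \<Union>{C \<in> comps0. C \<subseteq> L}"
    proof
      fix i assume i: "i \<in> L"
      have "i < n" using i LA LsA(3) unfolding A_def by auto
      then have "comp 0 i \<in> comps0" unfolding comps0_def using compI by simp
      moreover have "i \<in> comp 0 i" unfolding comp_def by simp
      ultimately show "i \<in> \<Union>{C \<in> comps0. C \<subseteq> L}" using closedA[OF LA i] by blast
    qed
  qed auto
  have chain: "L \<subseteq> L' \<or> L' \<subseteq> L" if LL: "L \<in> Ls" "L' \<in> Ls" for L L'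
  proof -
    obtain t t' where "L = Lt t" "L' = Lt t'" using LL unfolding Ls_def by auto
    then show ?thesis unfolding Lt_def by (cases "t \<le> t'") auto
  qed
  have inj_aux: "L = L'" if "L \<in> A" "L' \<in> A" "L \<subseteq> L'" "phi L = phi L'" for L L'
  proof -
    have "{C \<in> comps0. C \<subseteq> L} \<subseteq> {C \<in> comps0. C \<subseteq> L'}" using that(3) by auto
    moreover have "finite {C \<in> comps0. C \<subseteq> L'}" using c0fin by simp
    ultimately have "{C \<in> comps0. C \<subseteq> L} = {C \<in> comps0. C \<subseteq> L'}"
      using that(4) unfolding phi_def by (simp add: card_subset_eq)
    then show ?thesis using Lunion[OF that(1)] Lunion[OF that(2)] by simp
  qed
  have injA: "inj_on phi A"
  proof (rule inj_onI)
    fix L L' assume LL: "L \<in> A" "L' \<in> A" "phi L = phi L'"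
    then have "L \<in> Ls" "L' \<in> Ls" unfolding A_def by auto
    then show "L = L'" using chain inj_aux LL by metis
  qed
  have phiA: "phi ` A \<subseteq> {1..m}"
  proof
    fix k assume "k \<in> phi ` A"
    then obtain L where LA: "L \<in> A" and k: "k = phi L" by auto
    have i0L: "i0 \<in> L" using LA LsA(1) unfolding A_def by auto
    have "comp 0 i0 \<in> {C \<in> comps0. C \<subseteq> L}"
      using closedA[OF LA i0L] compI[OF i0(1)] unfolding comps0_def by simp
    moreover have "finite {C \<in> comps0. C \<subseteq> L}" using c0fin by simp
    ultimately have "1 \<le> phi L" unfolding phi_def by (metis One_nat_def Suc_leI card_gt_0_iff empty_iff)
    moreover have "phi L \<le> card comps0" unfolding phi_def using c0fin by (intro card_mono) auto
    ultimately show "k \<in> {1..m}" using k c0m by auto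
  qed
  have cA: "card A \<le> m" using card_inj_on_le[OF injA phiA] by simp
  have Afin: "finite A" unfolding A_def using Lsfin by simp
  have cF2: "card F2 \<le> m" unfolding F2_def A_def[symmetric]
    using card_image_le[OF Afin, of "\<lambda>L. (tau L, Cc L)"] cA by linarith
  have cF: "card F \<le> 2 * m" unfolding F_def using card_Un_le[of F1 F2] cF1 cF2 by linarith
  define g where "g p = (diam (x (fst p)) (snd p))\<^sup>2" for p :: "nat \<times> nat set"
  define Sig where "Sig = Sigma {..tc} (\<lambda>t. components n (Gs t))"
  have Sfin: "finite Sig" unfolding Sig_def using finite_components by auto
  have S_eq: "S = sum g Sig"
    unfolding S_def Sig_def g_def using finite_components
    by (subst sum.Sigma) (auto simp: case_prod_beta)
  have FSig: "F \<subseteq> Sig" using Fprops unfolding Sig_def by auto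
  have sumF: "sum g F \<le> S" unfolding S_eq g_def using Sfin FSig by (intro sum_mono2) auto
  have S0: "0 \<le> S" unfolding S_eq g_def by (intro sum_nonneg) auto
  have len: "hi - lo \<le> (\<Sum>p\<in>F. diam (x (fst p)) (snd p))"
    using cover_len[OF Ffin cover lfuf(1)] lfuf(2) by simp
  have "(hi - lo)\<^sup>2 \<le> (\<Sum>p\<in>F. diam (x (fst p)) (snd p))\<^sup>2"
    using len lohi by (intro power_mono) auto
  also have "\<dots> \<le> (\<Sum>p\<in>F. (diam (x (fst p)) (snd p))\<^sup>2) * card F"
    by (rule sum_squared_le_sum_of_squares)
  also have "\<dots> \<le> S * card F" using sumF unfolding g_def by (intro mult_right_mono) auto
  also have "\<dots> \<le> S * (2 * m)" using cF S0 by (intro mult_left_mono) auto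
  finally have key: "(hi - lo)\<^sup>2 \<le> 2 * real m * S" by (simp add: mult.commute)
  have mpos: "0 < m"
  proof -
    have "comp 0 i0 \<in> comps0" unfolding comps0_def using compI[OF i0(1)] by simp
    then have "card comps0 > 0" using c0fin by (auto simp: card_gt_0_iff)
    then show ?thesis using c0m by simp
  qed
  define av where "av = (1 / real n) * (\<Sum>j<n. x 0 j)"
  have "(\<Sum>j<n. lo) \<le> (\<Sum>j<n. x 0 j)" using lo_le by (intro sum_mono) auto
  then have "real n * lo \<le> (\<Sum>j<n. x 0 j)" by simp
  then have avlo: "lo \<le> av" unfolding av_def using npos by (rule aux_C[rotated])
  have "(\<Sum>j<n. x 0 j) \<le> (\<Sum>j<n. hi)" using le_hi by (intro sum_mono) auto
  then have "(\<Sum>j<n. x 0 j) \<le> real n * hi" by simp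
  then have avhi: "av \<le> hi" unfolding av_def using npos by (rule aux_D[rotated])
  have each: "real d * (x 0 i - av)\<^sup>2 \<le> real d * (hi - lo)\<^sup>2" if i: "i < n" for i
  proof -
    have "\<bar>x 0 i - av\<bar> \<le> hi - lo" using lo_le[OF i] le_hi[OF i] avlo avhi by linarith
    then have "\<bar>x 0 i - av\<bar>\<^sup>2 \<le> (hi - lo)\<^sup>2" by (intro power_mono) auto
    then show ?thesis by (intro mult_left_mono) auto
  qed
  have "(\<Sum>i<n. real d * (x 0 i - av)\<^sup>2) \<le> (\<Sum>i<n. real d * (hi - lo)\<^sup>2)"
    using each by (intro sum_mono) auto
  then have tot: "(\<Sum>i<n. real d * (x 0 i - av)\<^sup>2) \<le> real n * real d * (hi - lo)\<^sup>2" by simp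
  have pos: "0 < 2 * real d * real m * real n" using dpos mpos npos by simp
  have "1 / (2 * real d * real m * real n) * (\<Sum>i<n. real d * (x 0 i - av)\<^sup>2)
        \<le> 1 / (2 * real d * real m * real n) * (real n * real d * (hi - lo)\<^sup>2)"
    using tot pos by (intro mult_left_mono) auto
  also have "\<dots> = (hi - lo)\<^sup>2 / (2 * real m)" by (rule aux_eqA[OF dpos mpos npos])
  also have "\<dots> \<le> S" by (rule aux_B[OF mpos key])
  finally have fin: "1 / (2 * real d * real m * real n) * (\<Sum>i<n. real d * (x 0 i - av)\<^sup>2) \<le> S" .
  then show ?thesis unfolding S_def tc_def av_def .
qed

end
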